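(* Let $p,q$ be positive integers with $2\le p/q<4$, and let $f,g$ be two $(p,q)$-colourings of a graph $G$ where $g$ is obtained from $f$ by recolouring a vertex set $X$ by $\alpha$, i.e. $\alpha\in\{1,\dots,p-1\}$, $g(v)\equiv f(v)+\alpha\pmod p$ for $v\in X$ and $g(v)=f(v)$ for $v\notin X$. Then either there is a sequence of $(p,q)$-colourings $f=f_0,f_1,\dots,f_\alpha=g$ in which each $f_{i+1}$ is obtained from $f_i$ by recolouring $X$ by $1$ (adding $1$ modulo $p$ to the colour of every vertex of $X$), or there is a sequence of $(p,q)$-colourings $f=f_0,f_1,\dots,f_{p-\alpha}=g$ in which each $f_{i+1}$ is obtained from $f_i$ by recolouring $X$ by $-1$ (subtracting $1$ modulo $p$ from the colour of every vertex of $X$).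
   Context: A $(p,q)$-colouring of $G$ is a map $f:V(G)\to\{0,\dots,p-1\}$ with $q\le|f(u)-f(v)|\le p-q$ for every edge $uv$. *)

theory Defs
  imports Main
begin

definition simple_graph :: "'a set \<Rightarrow> ('a \<Rightarrow> 'a \<Rightarrow> bool) \<Rightarrow> bool" where
  "simple_graph V E \<longleftrightarrow> finite V \<and> (\<forall>u v. E u v \<longrightarrow> u \<in> V \<and> v \<in> V \<and> u \<noteq> v \<and> E v u)"

definition pq_colouring :: "nat \<Rightarrow> nat \<Rightarrow> 'a set \<Rightarrow> ('a \<Rightarrow> 'a \<Rightarrow> bool) \<Rightarrow> ('a \<Rightarrow> nat) \<Rightarrow> bool" where
  "pq_colouring p q V E f \<longleftrightarrow>
     (\<forall>v\<in>V. f v < p) \<and>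
     (\<forall>u v. E u v \<longrightarrow> int q \<le> \<bar>int (f u) - int (f v)\<bar> \<and> \<bar>int (f u) - int (f v)\<bar> \<le> int p - int q)"

definition recolour :: "nat \<Rightarrow> 'a set \<Rightarrow> 'a set \<Rightarrow> int \<Rightarrow> ('a \<Rightarrow> nat) \<Rightarrow> ('a \<Rightarrow> nat) \<Rightarrow> bool" where
  "recolour p V X a f g \<longleftrightarrow>
     (\<forall>v\<in>V. (v \<in> X \<longrightarrow> int (g v) = (int (f v) + a) mod int p) \<and> (v \<notin> X \<longrightarrow> g v = f v))"

end

theory Submission
  imports Defs
begin

lemma L1:
  fixes a b p q :: int
  assumes "0\<le>a" "a<p" "0\<le>b" "b<p" "0<q"
  shows "(q \<le> \<bar>a-b\<bar> \<and> \<bar>a-b\<bar> \<le> p-q) = (q \<le> (a-b) mod p \<and> (a-b) mod p \<le> p-q)"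
proof (cases "b \<le> a")
  case True
  then have "(a-b) mod p = a-b" using assms by (simp add: mod_pos_pos_trivial)
  then show ?thesis using True by simp
next
  case False
  have "(a-b) mod p = (a-b+p) mod p" by simp
  also have "\<dots> = a-b+p" by (rule mod_pos_pos_trivial) (use assms False in auto)
  finally show ?thesis using False by auto
qed

lemma mod_mod_eq_int: "x mod (p::int) = x mod p" by simp

lemma arithF:
  fixes c a p q :: int
  assumes "q \<le> c" "c \<le> p-q" "0<q" "a\<ge>0" "a<p" "q \<le> (c+a) mod p" "(c+a) mod p \<le> p-q"
    "a < 2*q" "p<4*q"
  shows "c + a \<le> p - q"
proof (rule ccontr)
  assume h: "\<not> c + a \<le> p - q"
  show False
  proof (cases "c + a < p")
    case True
    then have "(c+a) mod p = c+a" using assms by (simp add: mod_pos_pos_trivial)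
    then show False using h assms by linarith
  next
    case False
    have "(c+a) mod p = (c+a-p) mod p" by (simp add: mod_diff_right_eq[symmetric])
    also have "\<dots> = c+a-p" by (rule mod_pos_pos_trivial) (use assms False in auto)
    finally show False using assms by linarith
  qed
qed

lemma arithB:
  fixes c a p q :: int
  assumes "q \<le> c" "c \<le> p-q" "0<q" "a\<ge>0" "a<p" "q \<le> (c+a) mod p" "(c+a) mod p \<le> p-q"
    "\<not> a < 2*q" "p<4*q"
  shows "c - (p - a) \<ge> q"
proof (cases "c + a < p")
  case True
  then have "(c+a) mod p = c+a" using assms by (simp add: mod_pos_pos_trivial)
  then show ?thesis using assms by linarith
next
  case False
  have "(c+a) mod p = (c+a-p) mod p" by (simp add: mod_diff_right_eq[symmetric])
  also have "\<dots> = c+a-p" by (rule mod_pos_pos_trivial) (use assms False in auto)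
  finally show ?thesis using assms by linarith
qed

lemma shift_col:
  assumes sg: "simple_graph V E" and q0: "0 < q" and p0: "0 < p"
    and fc: "pq_colouring p q V E f"
    and cross: "\<And>u v. E u v \<Longrightarrow> u\<in>X \<Longrightarrow> v\<notin>X \<Longrightarrow>
        int q \<le> (int (f u) - int (f v) + t) mod int p \<and> (int (f u) - int (f v) + t) mod int p \<le> int p - int q"
  shows "pq_colouring p q V E (\<lambda>v. if v\<in>X then nat((int (f v)+t) mod int p) else f v)"
    (is "pq_colouring p q V E ?F")
proof -
  have fl: "\<forall>v\<in>V. f v < p" using fc unfolding pq_colouring_def by blast
  have fe: "\<And>u v. E u v \<Longrightarrow> int q \<le> \<bar>int (f u) - int (f v)\<bar> \<and> \<bar>int (f u) - int (f v)\<bar> \<le> int p - int q"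
    using fc unfolding pq_colouring_def by blast
  have ev: "\<And>u v. E u v \<Longrightarrow> u \<in> V \<and> v \<in> V \<and> E v u" using sg unfolding simple_graph_def by blast
  have Fl: "\<forall>v\<in>V. ?F v < p" using fl p0
    by (auto simp: nat_less_iff)
  have Fint: "\<And>v. v \<in> X \<Longrightarrow> int (?F v) = (int (f v)+t) mod int p" using p0 by simp
  have cr: "int q \<le> \<bar>int (?F u) - int (?F v)\<bar> \<and> \<bar>int (?F u) - int (?F v)\<bar> \<le> int p - int q"
    if "E u v" "u\<in>X" "v\<notin>X" for u v
  proof -
    have uv: "u\<in>V" "v\<in>V" using ev that by auto
    have "(int (?F u) - int (?F v)) mod int p = (int (f u) - int (f v) + t) mod int p"
      using that Fint[of u] by (simp add: mod_diff_left_eq algebra_simps)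
    moreover have "int (?F u) < int p" "int (?F v) < int p" using Fl uv by auto
    ultimately show ?thesis using L1[of "int (?F u)" "int p" "int (?F v)" "int q"] cross[OF that] q0
      by simp
  qed
  have "int q \<le> \<bar>int (?F u) - int (?F v)\<bar> \<and> \<bar>int (?F u) - int (?F v)\<bar> \<le> int p - int q"
    if "E u v" for u v
  proof -
    have uv: "u\<in>V" "v\<in>V" "E v u" using ev that by auto
    consider "u\<in>X" "v\<in>X" | "u\<notin>X" "v\<notin>X" | "u\<in>X" "v\<notin>X" | "u\<notin>X" "v\<in>X" by blast
    then show ?thesis
    proof cases
      case 1
      have "(int (?F u) - int (?F v)) mod int p = (int (f u) - int (f v)) mod int p"
        using 1 Fint[of u] Fint[of v] by (simp add: mod_diff_eq)
      moreover have "int (?F u) < int p" "int (?F v) < int p" using Fl uv by auto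
      moreover have "int (f u) < int p" "int (f v) < int p" using fl uv by auto
      ultimately show ?thesis
        using L1[of "int (?F u)" "int p" "int (?F v)" "int q"]
          L1[of "int (f u)" "int p" "int (f v)" "int q"] fe[OF that] q0 by simp
    next
      case 2 then show ?thesis using fe[OF that] by simp
    next
      case 3 then show ?thesis using cr that by blast
    next
      case 4 then show ?thesis using cr[of v u] uv by (simp add: abs_minus_commute)
    qed
  qed
  then show ?thesis using Fl unfolding pq_colouring_def by blast
qed

theorem proposition2p6:
  fixes p q \<alpha> :: nat and V X :: "'a set" and E :: "'a \<Rightarrow> 'a \<Rightarrow> bool" and f g :: "'a \<Rightarrow> nat"
  assumes "simple_graph V E"
    and "0 < q" and "2 * q \<le> p" and "p < 4 * q"
    and "pq_colouring p q V E f" and "pq_colouring p q V E g"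
    and "X \<subseteq> V"
    and "1 \<le> \<alpha>" and "\<alpha> \<le> p - 1"
    and "recolour p V X (int \<alpha>) f g"
  shows "(\<exists>fs :: nat \<Rightarrow> 'a \<Rightarrow> nat.
            (\<forall>v\<in>V. fs 0 v = f v) \<and> (\<forall>v\<in>V. fs \<alpha> v = g v) \<and>
            (\<forall>i\<le>\<alpha>. pq_colouring p q V E (fs i)) \<and>
            (\<forall>i<\<alpha>. recolour p V X 1 (fs i) (fs (Suc i))))
       \<or> (\<exists>fs :: nat \<Rightarrow> 'a \<Rightarrow> nat.
            (\<forall>v\<in>V. fs 0 v = f v) \<and> (\<forall>v\<in>V. fs (p - \<alpha>) v = g v) \<and>
            (\<forall>i\<le>p - \<alpha>. pq_colouring p q V E (fs i)) \<and>
            (\<forall>i<p - \<alpha>. recolour p V X (-1) (fs i) (fs (Suc i))))"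
proof -
  note sg = assms(1) and q0 = assms(2) and fc = assms(5) and gc = assms(6)
  have p0: "0 < p" using assms by linarith
  have fl: "\<forall>v\<in>V. f v < p" using fc unfolding pq_colouring_def by blast
  have gl: "\<forall>v\<in>V. g v < p" using gc unfolding pq_colouring_def by blast
  have fe: "\<And>u v. E u v \<Longrightarrow> int q \<le> \<bar>int (f u) - int (f v)\<bar> \<and> \<bar>int (f u) - int (f v)\<bar> \<le> int p - int q"
    using fc unfolding pq_colouring_def by blast
  have ge: "\<And>u v. E u v \<Longrightarrow> int q \<le> \<bar>int (g u) - int (g v)\<bar> \<and> \<bar>int (g u) - int (g v)\<bar> \<le> int p - int q"
    using gc unfolding pq_colouring_def by blast
  have ev: "\<And>u v. E u v \<Longrightarrow> u \<in> V \<and> v \<in> V" using sg unfolding simple_graph_def by blast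
  have gX: "\<And>v. v\<in>X \<Longrightarrow> int (g v) = (int (f v) + int \<alpha>) mod int p"
    using assms(7,10) unfolding recolour_def by blast
  have gN: "\<And>v. v\<in>V \<Longrightarrow> v\<notin>X \<Longrightarrow> g v = f v"
    using assms(10) unfolding recolour_def by blast
  have crossdata: "int q \<le> (int (f u) - int (f v)) mod int p \<and> (int (f u) - int (f v)) mod int p \<le> int p - int q
      \<and> int q \<le> ((int (f u) - int (f v)) mod int p + int \<alpha>) mod int p
      \<and> ((int (f u) - int (f v)) mod int p + int \<alpha>) mod int p \<le> int p - int q"
    if "E u v" "u\<in>X" "v\<notin>X" for u v
  proof -
    have uv: "u\<in>V" "v\<in>V" using ev that by auto
    have a: "int (f u) < int p" "int (f v) < int p" "int (g u) < int p" using fl gl uv by auto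
    have "(int (g u) - int (g v)) mod int p = ((int (f u) - int (f v)) mod int p + int \<alpha>) mod int p"
    proof -
      have "(int (g u) - int (g v)) mod int p = ((int (f u) + int \<alpha>) mod int p - int (f v)) mod int p"
        using gX[of u] gN[of v] that uv by simp
      also have "\<dots> = (int (f u) + int \<alpha> - int (f v)) mod int p" by (simp add: mod_diff_left_eq)
      also have "\<dots> = ((int (f u) - int (f v)) + int \<alpha>) mod int p" by (simp add: algebra_simps)
      also have "\<dots> = ((int (f u) - int (f v)) mod int p + int \<alpha>) mod int p" by (simp add: mod_add_left_eq)
      finally show ?thesis .
    qed
    then show ?thesis
      using L1[of "int (g u)" "int p" "int (g v)" "int q"] L1[of "int (f u)" "int p" "int (f v)" "int q"]
        fe[OF that(1)] ge[OF that(1)] a gN[of v] uv that q0 by simp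
  qed
  have fmod: "\<And>v. v \<in> V \<Longrightarrow> int (f v) mod int p = int (f v)" using fl by simp
  show ?thesis
  proof (cases "int \<alpha> < 2 * int q")
    case True
    define fs where "fs = (\<lambda>(i::nat) v. if v\<in>X then nat((int (f v)+int i) mod int p) else f v)"
    have "\<forall>v\<in>V. fs 0 v = f v" using fmod by (simp add: fs_def)
    moreover have "\<forall>v\<in>V. fs \<alpha> v = g v" using gX gN by (auto simp: fs_def simp flip: gX)
    moreover have "\<forall>i\<le>\<alpha>. pq_colouring p q V E (fs i)"
    proof (intro allI impI)
      fix i assume i: "i \<le> \<alpha>"
      show "pq_colouring p q V E (fs i)" unfolding fs_def
      proof (rule shift_col[OF sg q0 p0 fc])
        fix u v assume uv: "E u v" "u\<in>X" "v\<notin>X"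
        define c where "c = (int (f u) - int (f v)) mod int p"
        have cd: "int q \<le> c" "c \<le> int p - int q" "int q \<le> (c + int \<alpha>) mod int p"
            "(c + int \<alpha>) mod int p \<le> int p - int q"
          using crossdata[OF uv] unfolding c_def by auto
        have "c + int \<alpha> \<le> int p - int q"
          using arithF[OF cd(1,2) _ _ _ cd(3,4)] True assms q0 by linarith
        then have "(c + int i) mod int p = c + int i" using cd i q0
          by (intro mod_pos_pos_trivial) auto
        moreover have "(int (f u) - int (f v) + int i) mod int p = (c + int i) mod int p"
          unfolding c_def by (simp add: mod_add_left_eq)
        ultimately show "int q \<le> (int (f u) - int (f v) + int i) mod int p \<and>
             (int (f u) - int (f v) + int i) mod int p \<le> int p - int q"
          using cd i \<open>c + int \<alpha> \<le> int p - int q\<close> by simp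
      qed
    qed
    moreover have "\<forall>i<\<alpha>. recolour p V X 1 (fs i) (fs (Suc i))"
      unfolding recolour_def fs_def using p0
      by (auto simp: mod_add_left_eq mod_add_right_eq algebra_simps)
    ultimately show ?thesis by blast
  next
    case False
    define fs where "fs = (\<lambda>(i::nat) v. if v\<in>X then nat((int (f v) + - int i) mod int p) else f v)"
    have "\<forall>v\<in>V. fs 0 v = f v" using fmod by (simp add: fs_def)
    moreover have "\<forall>v\<in>V. fs (p - \<alpha>) v = g v"
    proof
      fix v assume v: "v\<in>V"
      have "(int (f v) + - int (p - \<alpha>)) mod int p = (int (f v) + int \<alpha> - int p) mod int p"
        using assms(9) by (simp add: of_nat_diff algebra_simps)
      also have "\<dots> = (int (f v) + int \<alpha>) mod int p" by (simp add: mod_diff_right_eq[symmetric])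
      finally show "fs (p - \<alpha>) v = g v" using gX gN v by (auto simp: fs_def simp flip: gX)
    qed
    moreover have "\<forall>i\<le>p - \<alpha>. pq_colouring p q V E (fs i)"
    proof (intro allI impI)
      fix i assume i: "i \<le> p - \<alpha>"
      show "pq_colouring p q V E (fs i)" unfolding fs_def
      proof (rule shift_col[OF sg q0 p0 fc])
        fix u v assume uv: "E u v" "u\<in>X" "v\<notin>X"
        define c where "c = (int (f u) - int (f v)) mod int p"
        have cd: "int q \<le> c" "c \<le> int p - int q" "int q \<le> (c + int \<alpha>) mod int p"
            "(c + int \<alpha>) mod int p \<le> int p - int q"
          using crossdata[OF uv] unfolding c_def by auto
        have b: "c - (int p - int \<alpha>) \<ge> int q"
          using arithB[OF cd(1,2) _ _ _ cd(3,4)] False assms q0 by linarith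
        have ii: "int i \<le> int p - int \<alpha>" using i assms(9) by linarith
        then have "(c + - int i) mod int p = c + - int i" using cd b q0
          by (intro mod_pos_pos_trivial) auto
        moreover have "(int (f u) - int (f v) + - int i) mod int p = (c + - int i) mod int p"
          unfolding c_def by (simp only: mod_add_left_eq)
        ultimately show "int q \<le> (int (f u) - int (f v) + - int i) mod int p \<and>
             (int (f u) - int (f v) + - int i) mod int p \<le> int p - int q"
          using cd b ii by simp
      qed
    qed
    moreover have "\<forall>i<p - \<alpha>. recolour p V X (-1) (fs i) (fs (Suc i))"
      unfolding recolour_def fs_def using p0
      by (auto simp: mod_diff_left_eq algebra_simps)
    ultimately show ?thesis by blast
  qed
qed

end
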